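(* Let $c\in\mathbb{R}^m$ and let $T_c:\mathbb{R}^m\to\mathbb{R}^m$ be the linear map which is the identity if $c=0$, and, if $c\neq0$, sends $c\mapsto\lambda(\|c\|)\,c$ and is the identity on $c^\perp$. Then $$b_\infty\, T_c\left(\frac{1}{\sqrt{2\pi}}B_m\right)\subset G(c)\subset T_c\left(\frac{1}{\sqrt{2\pi}}B_m\right),$$ where $B_m$ is the unit ball of $\mathbb{R}^m$ and $b_\infty:=\min\{\varphi_\infty(\cos t,\sin t): t\in[0,2\pi]\}\approx 0.91$.
   Context: For an integrable random vector $X\in\mathbb{R}^m$, the Vitale zonoid $\mathbb{E}\underline{X}$ is the convex body with support function $h(u)=\frac12\mathbb{E}|\langle u,X\rangle|$ (where $h_K(u)=\sup_{x\in K}\langle u,x\rangle$). For $c\in\mathbb{R}^m$, $G(c):=\mathbb{E}\underline{c+\xi}$ with $\xi\in\mathbb{R}^m$ a standard Gaussian vector. $\operatorname{erf}(t)=\frac{2}{\sqrt\pi}\int_0^te^{-s^2}ds$. The function $\lambda:\mathbb{R}\to\mathbb{R}$ is $\lambda(s)=e^{-s^2/2}+\sqrt{\pi/2}\,s\,\operatorname{erf}(s/\sqrt2)$, and $\varphi_\infty:\mathbb{R}^2\to\mathbb{R}$ is $\varphi_\infty(x,z)=|z|e^{-x^2/(\pi z^2)}+x\operatorname{erf}\left(\frac{x}{\sqrt\pi|z|}\right)$ (extended by continuity at $z=0$, where it equals $|x|$). *)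

theory Defs
  imports "HOL-Probability.Probability"
begin

definition erf :: "real \<Rightarrow> real" where
  "erf t = 2 / sqrt pi * (LBINT s=0..t. exp (- (s\<^sup>2)))"

definition lambda_fun :: "real \<Rightarrow> real" where
  "lambda_fun s = exp (- (s\<^sup>2) / 2) + sqrt (pi / 2) * s * erf (s / sqrt 2)"

definition phi_inf :: "real \<Rightarrow> real \<Rightarrow> real" where
  "phi_inf x z = (if z = 0 then \<bar>x\<bar>
     else \<bar>z\<bar> * exp (- (x\<^sup>2) / (pi * z\<^sup>2)) + x * erf (x / (sqrt pi * \<bar>z\<bar>)))"

definition b_inf :: real where
  "b_inf = Inf ((\<lambda>t. phi_inf (cos t) (sin t)) ` {0..2*pi})"

definition std_gauss :: "'a::euclidean_space measure" where
  "std_gauss = density lborel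
     (\<lambda>x. ennreal ((2*pi) powr (- real DIM('a) / 2) * exp (- (norm x)\<^sup>2 / 2)))"

text \<open>Support function of the Vitale zonoid of c + xi: h(u) = 1/2 E|<u, c + xi>|.\<close>
definition zonoid_support :: "'a::euclidean_space \<Rightarrow> 'a \<Rightarrow> real" where
  "zonoid_support c u = (1/2) * (\<integral>\<xi>. \<bar>inner u (c + \<xi>)\<bar> \<partial>std_gauss)"

definition G :: "'a::euclidean_space \<Rightarrow> 'a set" where
  "G c = {x. \<forall>u. inner u x \<le> zonoid_support c u}"

definition T :: "'a::euclidean_space \<Rightarrow> 'a \<Rightarrow> 'a" where
  "T c x = (if c = 0 then x
     else x + ((lambda_fun (norm c) - 1) * (inner c x / (norm c)\<^sup>2)) *\<^sub>R c)"

end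

theory Submission
  imports Defs
begin

lemma erf_deriv: "(erf has_real_derivative (2 / sqrt pi * exp (- (t\<^sup>2)))) (at t)"
proof -
  let ?a = "- \<bar>t\<bar> - 1" and ?b = "\<bar>t\<bar> + 1"
  have c: "continuous_on {?a..?b} (\<lambda>s::real. exp (- (s\<^sup>2)))"
    by (intro continuous_intros)
  have "((\<lambda>u. LBINT s=ereal 0..u. exp (- (s\<^sup>2))) has_vector_derivative exp (- (t\<^sup>2))) (at t within {?a..?b})"
    by (rule interval_integral_FTC2[OF _ _ c]) auto
  then have "((\<lambda>u. LBINT s=0..u. exp (- (s\<^sup>2))) has_vector_derivative exp (- (t\<^sup>2))) (at t within {?a..?b})"
    by (simp add: zero_ereal_def)
  then have "((\<lambda>u. LBINT s=0..u. exp (- (s\<^sup>2))) has_vector_derivative exp (- (t\<^sup>2))) (at t)"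
    by (subst (asm) at_within_interior) auto
  then have "((\<lambda>u. LBINT s=0..u. exp (- (s\<^sup>2))) has_real_derivative exp (- (t\<^sup>2))) (at t)"
    by (simp add: has_real_derivative_iff_has_vector_derivative)
  then show ?thesis
    unfolding erf_def[abs_def] by (intro DERIV_cmult)
qed

lemma erf_0[simp]: "erf 0 = 0"
  by (simp add: erf_def zero_ereal_def)

lemma erf_odd: "erf (- t) = - erf t"
proof -
  have "\<And>x. ((\<lambda>t. erf t + erf (- t)) has_real_derivative 0) (at x)"
    by (auto intro!: derivative_eq_intros erf_deriv[THEN DERIV_chain2])
  then have "erf t + erf (- t) = erf 0 + erf (- 0)"
    by (intro DERIV_isconst_all) auto
  then show ?thesis by simp
qed

lemma erf_at_top: "(erf \<longlongrightarrow> 1) at_top"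
proof -
  have hb: "has_bochner_integral lborel (\<lambda>x. indicator {0..} x *\<^sub>R exp (- x\<^sup>2)) (sqrt pi / 2)"
    by (rule gaussian_moment_0)
  have si: "set_integrable lborel {0..} (\<lambda>x::real. exp (- x\<^sup>2))"
    using hb unfolding set_integrable_def by (auto simp: has_bochner_integral_iff)
  have sv: "set_lebesgue_integral lborel {0..} (\<lambda>x::real. exp (- x\<^sup>2)) = sqrt pi / 2"
    using hb unfolding set_lebesgue_integral_def by (auto simp: has_bochner_integral_iff)
  have "((\<lambda>b. set_lebesgue_integral lborel {0..b} (\<lambda>x::real. exp (- x\<^sup>2))) \<longlongrightarrow> sqrt pi / 2) at_top"
    using tendsto_set_lebesgue_integral_at_top[OF _ si] sv by auto
  then have "((\<lambda>b. 2 / sqrt pi * set_lebesgue_integral lborel {0..b} (\<lambda>x::real. exp (- x\<^sup>2))) \<longlongrightarrow> 2 / sqrt pi * (sqrt pi / 2)) at_top"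
    by (intro tendsto_mult tendsto_const)
  then have l: "((\<lambda>b. 2 / sqrt pi * set_lebesgue_integral lborel {0..b} (\<lambda>x::real. exp (- x\<^sup>2))) \<longlongrightarrow> 1) at_top"
    by simp
  show ?thesis
  proof (rule Lim_transform_eventually[OF l])
    show "\<forall>\<^sub>F x in at_top. 2 / sqrt pi * set_lebesgue_integral lborel {0..x} (\<lambda>x. exp (- x\<^sup>2)) = erf x"
      unfolding eventually_at_top_linorder
      by (rule exI[of _ 0]) (simp add: erf_def interval_integral_Icc zero_ereal_def)
  qed
qed

lemma erf_at_bot: "(erf \<longlongrightarrow> -1) at_bot"
proof -
  have "((\<lambda>x. - erf x) \<longlongrightarrow> -1) at_top"
    by (intro tendsto_minus erf_at_top)
  then have "((\<lambda>x. erf (- x)) \<longlongrightarrow> -1) at_top"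
    by (simp add: erf_odd)
  then show ?thesis
    by (simp add: filterlim_at_bot_mirror)
qed

lemma aux2: "X * sqrt 2 * Y / sqrt pi = Y * (2*X) / (sqrt pi * sqrt (2::real))"
proof -
  have "Y * (2*X) / (sqrt pi * sqrt (2::real)) = Y * ((sqrt 2 * sqrt 2)*X) / (sqrt pi * sqrt (2::real))" by simp
  also have "\<dots> = X * sqrt 2 * Y / sqrt pi" by (simp add: field_simps)
  finally show ?thesis ..
qed

definition L1 :: "real \<Rightarrow> real" where "L1 s = sqrt (pi / 2) * erf (s / sqrt 2)"

lemma sqrt_aux: "sqrt (pi / 2) * (2 / sqrt pi) / sqrt 2 = 1"
  by (simp add: real_sqrt_divide field_simps)

lemma lambda_deriv: "(lambda_fun has_real_derivative L1 s) (at s)"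
proof -
  have e: "exp (- ((s / sqrt 2)\<^sup>2)) = exp (- (s\<^sup>2) / 2)"
    by (simp add: power_divide)
  have "((\<lambda>s. exp (- (s\<^sup>2) / 2) + sqrt (pi / 2) * s * erf (s / sqrt 2)) has_real_derivative
      (exp (- (s\<^sup>2) / 2) * (- (2 * s) / 2) + (sqrt (pi / 2) * erf (s / sqrt 2) + sqrt (pi / 2) * s * (2 / sqrt pi * exp (- ((s / sqrt 2)\<^sup>2)) * (1 / sqrt 2))))) (at s)"
    by (auto intro!: derivative_eq_intros erf_deriv[THEN DERIV_chain2]) (rule aux2)
  moreover have "exp (- (s\<^sup>2) / 2) * (- (2 * s) / 2) + (sqrt (pi / 2) * erf (s / sqrt 2) + sqrt (pi / 2) * s * (2 / sqrt pi * exp (- ((s / sqrt 2)\<^sup>2)) * (1 / sqrt 2))) = L1 s"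
  proof -
    have "sqrt (pi / 2) * s * (2 / sqrt pi * exp (- ((s / sqrt 2)\<^sup>2)) * (1 / sqrt 2)) = s * exp (- (s\<^sup>2) / 2) * (sqrt (pi / 2) * (2 / sqrt pi) / sqrt 2)"
      unfolding e by (simp only: divide_inverse ac_simps)
    also have "\<dots> = s * exp (- (s\<^sup>2) / 2)" by (simp only: sqrt_aux mult_1_right)
    finally show ?thesis by (simp add: L1_def)
  qed
  ultimately show ?thesis unfolding lambda_fun_def[abs_def] by simp
qed

lemma L1_deriv: "(L1 has_real_derivative exp (- (s\<^sup>2) / 2)) (at s)"
proof -
  have e: "exp (- ((s / sqrt 2)\<^sup>2)) = exp (- (s\<^sup>2) / 2)"
    by (simp add: power_divide)
  have "(L1 has_real_derivative sqrt (pi / 2) * (2 / sqrt pi * exp (- ((s / sqrt 2)\<^sup>2)) * (1 / sqrt 2))) (at s)"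
    unfolding L1_def[abs_def] by (auto intro!: derivative_eq_intros erf_deriv[THEN DERIV_chain2]) (rule aux2)
  moreover have "sqrt (pi / 2) * (2 / sqrt pi * exp (- ((s / sqrt 2)\<^sup>2)) * (1 / sqrt 2)) = exp (- (s\<^sup>2) / 2)"
  proof -
    have "sqrt (pi / 2) * (2 / sqrt pi * exp (- ((s / sqrt 2)\<^sup>2)) * (1 / sqrt 2)) = exp (- (s\<^sup>2) / 2) * (sqrt (pi / 2) * (2 / sqrt pi) / sqrt 2)"
      unfolding e by (simp only: divide_inverse ac_simps)
    also have "\<dots> = exp (- (s\<^sup>2) / 2)" by (simp only: sqrt_aux mult_1_right)
    finally show ?thesis .
  qed
  ultimately show ?thesis by simp
qed

lemma lambda_L1: "lambda_fun s = s * L1 s + exp (- (s\<^sup>2) / 2)"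
  by (simp add: lambda_fun_def L1_def)

definition Phi :: "real \<Rightarrow> real" where "Phi y = (1 + erf (y / sqrt 2)) / 2"

lemma aux3: "2 / sqrt pi * E * (1 / sqrt 2) / 2 = 1 / sqrt (2*pi) * (E::real)"
proof -
  have "2 / sqrt pi * E * (1 / sqrt 2) / 2 = E / (sqrt pi * sqrt 2)" by simp
  also have "\<dots> = 1 / sqrt (2*pi) * E" by (simp add: real_sqrt_mult mult.commute)
  finally show ?thesis .
qed

lemma erf_scaled_deriv: "((\<lambda>y. erf (y / sqrt 2)) has_real_derivative (2 / sqrt pi * exp (- ((y / sqrt 2)\<^sup>2))) * (1 / sqrt 2)) (at y)"
  by (rule DERIV_chain2[OF erf_deriv] DERIV_cdivide DERIV_ident)+

lemma Phi_deriv: "(Phi has_real_derivative std_normal_density y) (at y)"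
proof -
  have "(Phi has_real_derivative (0 + (2 / sqrt pi * exp (- ((y / sqrt 2)\<^sup>2))) * (1 / sqrt 2)) / 2) (at y)"
    unfolding Phi_def[abs_def] by (intro DERIV_cdivide DERIV_add DERIV_const erf_scaled_deriv)
  moreover have "(0 + (2 / sqrt pi * exp (- ((y / sqrt 2)\<^sup>2))) * (1 / sqrt 2)) / 2 = std_normal_density y"
    unfolding std_normal_density_def by (simp only: add_0_left aux3) (simp add: power_divide)
  ultimately show ?thesis by simp
qed

lemma phi_deriv: "(std_normal_density has_real_derivative (- y * std_normal_density y)) (at y)"
  unfolding std_normal_density_def[abs_def]
  by (auto intro!: derivative_eq_intros simp: field_simps)

lemma Phi_at_bot: "(Phi \<longlongrightarrow> 0) at_bot"
proof -
  have "filterlim (\<lambda>y::real. y / sqrt 2) at_bot at_bot"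
    using filterlim_tendsto_pos_mult_at_bot[OF tendsto_const[of "1 / sqrt 2"] _ filterlim_ident[of "at_bot::real filter"]]
    by (simp add: mult.commute)
  then have "((\<lambda>y. erf (y / sqrt 2)) \<longlongrightarrow> -1) at_bot"
    by (rule filterlim_compose[OF erf_at_bot])
  then have "((\<lambda>y. (1 + erf (y / sqrt 2)) / 2) \<longlongrightarrow> (1 + -1) / (2::real)) at_bot"
    by (auto intro!: tendsto_eq_intros)
  then show ?thesis by (simp add: Phi_def[abs_def])
qed

lemma phi_at_bot: "(std_normal_density \<longlongrightarrow> 0) at_bot"
proof -
  have "filterlim (\<lambda>y::real. - (y\<^sup>2) / 2) at_bot at_bot"
  proof -
    have "filterlim (\<lambda>y::real. y\<^sup>2) at_top at_bot"
      by (simp add: filterlim_at_bot_mirror filterlim_pow_at_top filterlim_ident)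
    then have "filterlim (\<lambda>y::real. y\<^sup>2 / 2) at_top at_bot"
      using filterlim_tendsto_pos_mult_at_top[OF tendsto_const[of "1 / 2"] _ \<open>filterlim (\<lambda>y::real. y\<^sup>2) at_top at_bot\<close>]
      by (simp add: mult.commute)
    then show ?thesis by (simp add: filterlim_uminus_at_bot)
  qed
  then have "((\<lambda>y::real. exp (- (y\<^sup>2) / 2)) \<longlongrightarrow> 0) at_bot"
    by (rule filterlim_compose[OF exp_at_bot])
  then have "((\<lambda>y::real. 1 / sqrt (2 * pi) * exp (- (y\<^sup>2) / 2)) \<longlongrightarrow> 1 / sqrt (2 * pi) * 0) at_bot"
    by (intro tendsto_intros)
  then show ?thesis by (simp add: std_normal_density_def[abs_def])
qed

lemma sqrt_2pi_aux: "2 / sqrt (2 * pi) = sqrt (2 / pi)"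
proof -
  have s2: "2 / sqrt 2 = sqrt (2::real)" using real_div_sqrt[of 2] by simp
  have "2 / sqrt (2 * pi) = (2 / sqrt 2) / sqrt pi" by (simp add: real_sqrt_mult)
  also have "\<dots> = sqrt (2 / pi)" by (simp add: s2 real_sqrt_divide)
  finally show ?thesis .
qed

lemma sqrt_recip_aux: "sqrt (2 / pi) * sqrt (pi / 2) = 1"
  by (simp add: real_sqrt_mult[symmetric])

lemma normal_density_cont: "isCont std_normal_density x"
  unfolding std_normal_density_def[abs_def] by (auto intro!: continuous_intros)

lemma abs_normal_integral_lborel:
  "(\<integral>y. std_normal_density y * \<bar>a + y\<bar> \<partial>lborel) = sqrt (2 / pi) * lambda_fun a"
proof -
  define f where "f y = - (a + y) * std_normal_density y" for y
  define F where "F y = - a * Phi y + std_normal_density y" for y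
  have Fd: "DERIV F x :> f x" for x
  proof -
    have "DERIV F x :> - a * std_normal_density x + (- x * std_normal_density x)"
      unfolding F_def[abs_def] by (intro DERIV_add DERIV_cmult Phi_deriv phi_deriv)
    then show ?thesis by (simp add: f_def algebra_simps)
  qed
  have Fc: "isCont F x" for x using Fd by (rule DERIV_isCont)
  have ftc: "set_integrable lborel (einterval (-\<infinity>) (ereal (-a))) f"
            "(LBINT x=-\<infinity>..ereal (-a). f x) = F (-a) - 0"
  proof -
    have A: "((F \<circ> real_of_ereal) \<longlongrightarrow> 0) (at_right (-\<infinity>))"
    proof -
      have "(F \<longlongrightarrow> - a * 0 + 0) at_bot"
        unfolding F_def[abs_def] by (intro tendsto_intros Phi_at_bot phi_at_bot)
      then show ?thesis by (simp add: ereal_tendsto_simps)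
    qed
    have B: "((F \<circ> real_of_ereal) \<longlongrightarrow> F (-a)) (at_left (ereal (-a)))"
    proof -
      have "(F \<longlongrightarrow> F (-a)) (at (-a))" using Fc[of "-a"] by (simp add: isCont_def)
      then have "(F \<longlongrightarrow> F (-a)) (at_left (-a))" by (rule tendsto_mono[OF at_within_le_at])
      then show ?thesis by (simp add: ereal_tendsto_simps)
    qed
    have fc: "isCont f x" for x unfolding f_def[abs_def] by (intro continuous_intros normal_density_cont)
    have nn: "AE x in lborel. -\<infinity> < ereal x \<longrightarrow> ereal x < ereal (-a) \<longrightarrow> 0 \<le> f x"
      by (auto simp: f_def intro!: mult_nonneg_nonneg)
    show "set_integrable lborel (einterval (-\<infinity>) (ereal (-a))) f"
      by (rule interval_integral_FTC_nonneg(1)[OF _ Fd fc nn A B]) simp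
    show "(LBINT x=-\<infinity>..ereal (-a). f x) = F (-a) - 0"
      by (rule interval_integral_FTC_nonneg(2)[OF _ Fd fc nn A B]) simp
  qed
  let ?I = "einterval (-\<infinity>) (ereal (-a))"
  have ein: "?I = {..< -a}" by (auto simp: einterval_def)
  have si: "integrable lborel (\<lambda>y. indicator ?I y *\<^sub>R f y)"
    using ftc(1) by (simp add: set_integrable_def)
  have sv: "(\<integral>y. indicator ?I y *\<^sub>R f y \<partial>lborel) = F (-a)"
    using ftc(2) by (simp add: interval_lebesgue_integral_def set_lebesgue_integral_def)
  have pw: "std_normal_density y * \<bar>a + y\<bar> = std_normal_density y * a + std_normal_density y * y + 2 * (indicator ?I y *\<^sub>R f y)" for y
    by (cases "y < -a") (auto simp: ein f_def algebra_simps abs_if)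
  have i1: "integrable lborel (\<lambda>y. std_normal_density y * a)" by simp
  have i2: "integrable lborel (\<lambda>y. std_normal_density y * y)" by (rule integrable_normal_moment_nz_1) simp
  have "(\<integral>y. std_normal_density y * \<bar>a + y\<bar> \<partial>lborel)
      = (\<integral>y. std_normal_density y * a \<partial>lborel) + (\<integral>y. std_normal_density y * y \<partial>lborel) + 2 * (\<integral>y. indicator ?I y *\<^sub>R f y \<partial>lborel)"
    unfolding pw using i1 i2 si by simp
  also have "\<dots> = a + 2 * F (-a)"
    using integral_normal_moment_nz_1[of 1 0] sv by simp
  also have "\<dots> = a * erf (a / sqrt 2) + 2 * std_normal_density a"
    by (simp add: F_def Phi_def erf_odd std_normal_density_def algebra_simps) (simp add: field_simps)
  also have "\<dots> = sqrt (2 / pi) * lambda_fun a"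
  proof -
    have "2 * std_normal_density a = sqrt (2 / pi) * exp (- (a\<^sup>2) / 2)"
      by (simp add: std_normal_density_def sqrt_2pi_aux[symmetric])
    moreover have "a * erf (a / sqrt 2) = sqrt (2 / pi) * (sqrt (pi / 2) * a * erf (a / sqrt 2))"
      using sqrt_recip_aux by (simp add: mult.assoc[symmetric])
    ultimately show ?thesis by (simp add: lambda_fun_def algebra_simps)
  qed
  finally show ?thesis .
qed

lemma abs_normal_integral: "(\<integral>y. \<bar>a + y\<bar> \<partial>std_normal_distribution) = sqrt (2 / pi) * lambda_fun a"
  by (subst integral_density) (auto simp: abs_normal_integral_lborel)

lemma L1_0[simp]: "L1 0 = 0" by (simp add: L1_def)
lemma lambda_0[simp]: "lambda_fun 0 = 1" by (simp add: lambda_fun_def)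

lemma lambda_even: "lambda_fun (- s) = lambda_fun s"
  by (simp add: lambda_fun_def erf_odd)

lemma L1_nonneg: assumes "0 \<le> s" shows "0 \<le> L1 s"
proof -
  have "L1 0 \<le> L1 s"
  proof (rule DERIV_nonneg_imp_nondecreasing[of 0 s])
    fix x show "\<exists>y. DERIV L1 x :> y \<and> 0 \<le> y"
      by (rule exI[of _ "exp (- (x\<^sup>2) / 2)"], rule conjI, rule L1_deriv, simp)
  qed (use assms in simp)
  then show ?thesis by simp
qed

lemma L1_le: assumes "0 \<le> s" shows "L1 s \<le> s"
proof -
  have "0 - L1 0 \<le> s - L1 s"
  proof (rule DERIV_nonneg_imp_nondecreasing[of 0 s])
    fix x assume "0 \<le> x" "x \<le> s"
    have "exp (- (x\<^sup>2) / 2) \<le> 1" by simp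
    then show "\<exists>y. DERIV (\<lambda>s. s - L1 s) x :> y \<and> 0 \<le> y"
      by (intro exI[of _ "1 - exp (- (x\<^sup>2) / 2)"] conjI DERIV_diff DERIV_ident L1_deriv) simp
  qed (use assms in auto)
  then show ?thesis by simp
qed

lemma lambda_ge1: assumes "0 \<le> s" shows "1 \<le> lambda_fun s"
proof -
  have "lambda_fun 0 \<le> lambda_fun s"
  proof (rule DERIV_nonneg_imp_nondecreasing[of 0 s])
    fix x :: real assume "0 \<le> x" then show "\<exists>y. DERIV lambda_fun x :> y \<and> 0 \<le> y"
      by (intro exI[of _ "L1 x"] conjI lambda_deriv L1_nonneg)
  qed (use assms in simp)
  then show ?thesis by simp
qed

definition kf :: "real \<Rightarrow> real" where "kf s = lambda_fun s * L1 s / s"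

lemma kf_mono: assumes "0 < s" "s \<le> r" shows "kf s \<le> kf r"
proof (rule DERIV_nonneg_imp_nondecreasing[OF assms(2)])
  fix x assume x: "s \<le> x" "x \<le> r"
  then have x0: "0 < x" using assms by simp
  let ?e = "exp (- (x\<^sup>2) / 2)"
  let ?D = "((L1 x * L1 x + ?e * lambda_fun x) * x - lambda_fun x * L1 x * 1) / (x * x)"
  have d: "DERIV kf x :> ?D"
    unfolding kf_def[abs_def] using x0
    by (intro DERIV_divide DERIV_mult lambda_deriv L1_deriv DERIV_ident) (use x0 in auto)
  have lam: "lambda_fun x = x * L1 x + ?e" by (rule lambda_L1)
  have num: "(L1 x * L1 x + ?e * lambda_fun x) * x - lambda_fun x * L1 x * 1 = ?e * (x * lambda_fun x - L1 x)"
    by (simp add: lam algebra_simps)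
  have "L1 x \<le> x" using L1_le x0 by simp
  moreover have "x \<le> x * lambda_fun x" using lambda_ge1[of x] x0 by simp
  ultimately have "0 \<le> ?e * (x * lambda_fun x - L1 x)" by simp
  then have "0 \<le> ?D" using num by simp
  then show "\<exists>y. DERIV kf x :> y \<and> 0 \<le> y" using d by blast
qed

lemma key_ineq_pos:
  assumes r: "0 \<le> r" and a: "0 \<le> a" "a \<le> 1"
  shows "(lambda_fun (r * a))\<^sup>2 \<le> (lambda_fun r)\<^sup>2 * a\<^sup>2 + 1 - a\<^sup>2"
proof -
  define D where "D r = a\<^sup>2 * (lambda_fun r)\<^sup>2 + 1 - a\<^sup>2 - (lambda_fun (r * a))\<^sup>2" for r
  have "D 0 \<le> D r"
  proof (rule DERIV_nonneg_imp_nondecreasing[OF r])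
    fix x assume x: "0 \<le> x" "x \<le> r"
    let ?y = "a\<^sup>2 * (2 * lambda_fun x * L1 x) - 2 * lambda_fun (x * a) * (L1 (x * a) * a)"
    have d: "DERIV D x :> ?y"
      unfolding D_def[abs_def] power2_eq_square
      apply (rule DERIV_cong)
       apply (rule DERIV_diff)
        apply (rule DERIV_diff)
         apply (rule DERIV_add)
          apply (rule DERIV_cmult)
          apply (rule DERIV_mult)
           apply (rule lambda_deriv)
          apply (rule lambda_deriv)
         apply (rule DERIV_const)
        apply (rule DERIV_const)
       apply (rule DERIV_mult)
        apply (rule DERIV_chain2[OF lambda_deriv])
        apply (rule DERIV_cmult_right)
        apply (rule DERIV_ident)
       apply (rule DERIV_chain2[OF lambda_deriv])
       apply (rule DERIV_cmult_right)
       apply (rule DERIV_ident)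
      apply (simp add: algebra_simps)
      done
    have "lambda_fun (x * a) * L1 (x * a) \<le> a * (lambda_fun x * L1 x)"
    proof (cases "x = 0 \<or> a = 0")
      case True
      then have "x * a = 0" by auto
      moreover have "0 \<le> a * (lambda_fun x * L1 x)"
        using lambda_ge1[of x] L1_nonneg[of x] x a by simp
      moreover have "lambda_fun (x * a) * L1 (x * a) = 0" by (simp only: \<open>x * a = 0\<close> L1_0 mult_zero_right)
      ultimately show ?thesis by linarith
    next
      case False
      then have xa: "0 < x * a" using x a by auto
      have "kf (x * a) \<le> kf x" by (rule kf_mono[OF xa mult_left_le[OF a(2) x(1)]])
      then have "lambda_fun (x * a) * L1 (x * a) / (x * a) \<le> lambda_fun x * L1 x / x" by (simp only: kf_def)
      then have "lambda_fun (x * a) * L1 (x * a) / (x * a) * (x * a) \<le> lambda_fun x * L1 x / x * (x * a)"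
        by (rule mult_right_mono) (use xa in simp)
      moreover have "lambda_fun (x * a) * L1 (x * a) / (x * a) * (x * a) = lambda_fun (x * a) * L1 (x * a)"
        using xa by simp
      moreover have "lambda_fun x * L1 x / x * (x * a) = a * (lambda_fun x * L1 x)"
        using xa False by simp
      ultimately show ?thesis by simp
    qed
    then have "0 \<le> 2 * a * (a * (lambda_fun x * L1 x) - lambda_fun (x * a) * L1 (x * a))"
      using a by simp
    moreover have "?y = 2 * a * (a * (lambda_fun x * L1 x) - lambda_fun (x * a) * L1 (x * a))"
      by (simp add: power2_eq_square algebra_simps)
    ultimately have "0 \<le> ?y" by simp
    then show "\<exists>y. DERIV D x :> y \<and> 0 \<le> y" using d by blast
  qed
  moreover have "D 0 = 0" by (simp add: D_def)
  ultimately have "0 \<le> a\<^sup>2 * (lambda_fun r)\<^sup>2 + 1 - a\<^sup>2 - (lambda_fun (r * a))\<^sup>2" by (simp add: D_def)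
  moreover have "(lambda_fun r)\<^sup>2 * a\<^sup>2 = a\<^sup>2 * (lambda_fun r)\<^sup>2" by (rule mult.commute)
  ultimately show ?thesis by linarith
qed

lemma key_ineq:
  assumes r: "0 \<le> r" and a: "\<bar>a\<bar> \<le> 1"
  shows "(lambda_fun (r * a))\<^sup>2 \<le> (lambda_fun r)\<^sup>2 * a\<^sup>2 + 1 - a\<^sup>2"
proof (cases "0 \<le> a")
  case True then show ?thesis using key_ineq_pos[OF r True] a by simp
next
  case False
  have "(lambda_fun (r * (- a)))\<^sup>2 \<le> (lambda_fun r)\<^sup>2 * (- a)\<^sup>2 + 1 - (- a)\<^sup>2"
    by (rule key_ineq_pos[OF r]) (use a False in auto)
  moreover have "lambda_fun (r * (- a)) = lambda_fun (r * a)"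
    using lambda_even[of "r * a"] by simp
  ultimately show ?thesis by simp
qed

definition gd :: "'a::euclidean_space \<Rightarrow> real" where
  "gd x = (2*pi) powr (- real DIM('a) / 2) * exp (- (norm x)\<^sup>2 / 2)"

lemma norm_sq_sum: "(norm (x::'a::euclidean_space))\<^sup>2 = (\<Sum>b\<in>Basis. (x \<bullet> b)\<^sup>2)"
proof -
  have "(norm x)\<^sup>2 = x \<bullet> x" by (rule power2_norm_eq_inner)
  also have "\<dots> = (\<Sum>b\<in>Basis. (x \<bullet> b) * (x \<bullet> b))" by (rule euclidean_inner)
  finally show ?thesis by (simp add: power2_eq_square)
qed

lemma gd_prod: "gd (x::'a::euclidean_space) = (\<Prod>b\<in>Basis. std_normal_density (x \<bullet> b))"
proof -
  have n: "(norm x)\<^sup>2 = (\<Sum>b\<in>Basis. (x \<bullet> b)\<^sup>2)"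
    by (rule norm_sq_sum)
  have "(2*pi) powr (- real DIM('a) / 2) = inverse (((2*pi) powr (1/2)) powr real DIM('a))"
    by (simp add: powr_powr powr_minus[symmetric])
  also have "\<dots> = (1 / sqrt (2*pi)) ^ DIM('a)"
    by (simp add: powr_half_sqrt powr_realpow power_one_over inverse_eq_divide)
  finally have p: "(2*pi) powr (- real DIM('a) / 2) = (1 / sqrt (2*pi)) ^ DIM('a)" .
  have "(\<Prod>b\<in>Basis. std_normal_density (x \<bullet> b)) = (\<Prod>b\<in>(Basis::'a set). 1 / sqrt (2*pi)) * (\<Prod>b\<in>Basis. exp (- (x \<bullet> b)\<^sup>2 / 2))"
    by (simp only: std_normal_density_def prod.distrib)
  also have "\<dots> = (1 / sqrt (2*pi)) ^ DIM('a) * exp (\<Sum>b\<in>Basis. - (x \<bullet> b)\<^sup>2 / 2)"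
    by (simp add: exp_sum)
  also have "(\<Sum>b\<in>(Basis::'a set). - (x \<bullet> b)\<^sup>2 / 2) = - (norm x)\<^sup>2 / 2"
    by (simp add: n sum_negf sum_divide_distrib)
  finally show ?thesis unfolding gd_def p by simp
qed

lemma integral_lborel_prod:
  fixes f :: "'b::euclidean_space \<Rightarrow> real \<Rightarrow> complex"
  assumes int: "\<And>b. b\<in>Basis \<Longrightarrow> integrable lborel (f b)"
  shows "(\<integral>x. (\<Prod>b\<in>Basis. f b (x \<bullet> b)) \<partial>(lborel::'b measure)) = (\<Prod>b\<in>Basis. \<integral>x. f b x \<partial>lborel)"
proof -
  interpret P: product_sigma_finite "\<lambda>_::'b. lborel::real measure" by standard
  have m[measurable]: "\<And>b. b\<in>Basis \<Longrightarrow> f b \<in> borel_measurable lborel"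
    using int by (auto dest: borel_measurable_integrable)
  have mm: "(\<lambda>x. \<Prod>b\<in>Basis. f b (x \<bullet> b)) \<in> borel_measurable (borel::'b measure)"
    using m by (intro borel_measurable_prod) (auto simp: measurable_lborel1 intro: measurable_compose[OF borel_measurable_inner[OF measurable_id measurable_const]])
  have "(\<integral>x. (\<Prod>b\<in>Basis. f b (x \<bullet> b)) \<partial>(lborel::'b measure))
      = (\<integral>g. (\<Prod>b\<in>Basis. f b ((\<Sum>b'\<in>Basis. g b' *\<^sub>R b') \<bullet> b)) \<partial>(\<Pi>\<^sub>M b\<in>(Basis::'b set). lborel))"
    by (subst lborel_eq) (rule integral_distr[OF _ mm], measurable)
  also have "\<dots> = (\<integral>g. (\<Prod>b\<in>Basis. f b (g b)) \<partial>(\<Pi>\<^sub>M b\<in>(Basis::'b set). lborel))"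
    by (intro Bochner_Integration.integral_cong prod.cong refl) (simp add: inner_sum_left_Basis)
  also have "\<dots> = (\<Prod>b\<in>Basis. \<integral>x. f b x \<partial>lborel)"
    by (rule P.product_integral_prod) (auto intro: int)
  finally show ?thesis .
qed

lemma prob_space_std_gauss: "prob_space (std_gauss :: 'a::euclidean_space measure)"
proof
  have "emeasure (std_gauss::'a measure) (space std_gauss) = (\<integral>\<^sup>+x. ennreal (gd x) \<partial>(lborel::'a measure))"
    by (simp add: std_gauss_def gd_def[abs_def] emeasure_density)
  also have "\<dots> = (\<integral>\<^sup>+x. (\<Prod>b\<in>Basis. ennreal (std_normal_density (x \<bullet> b))) \<partial>(lborel::'a measure))"
    by (simp add: gd_prod prod_ennreal)
  also have "\<dots> = (\<Prod>b\<in>(Basis::'a set). (\<integral>\<^sup>+x. ennreal (std_normal_density x) \<partial>lborel))"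
    by (rule nn_integral_lborel_prod) auto
  also have "(\<integral>\<^sup>+x. ennreal (std_normal_density x) \<partial>lborel) = 1"
    by (simp add: nn_integral_eq_integral)
  finally show "emeasure (std_gauss::'a measure) (space std_gauss) = 1" by simp
qed

lemma std_gauss_gd: "std_gauss = density lborel (\<lambda>x. ennreal (gd x))"
  by (simp add: std_gauss_def gd_def[abs_def])

lemma char_N_integral:
  "(CLINT x|lborel. std_normal_density x *\<^sub>R iexp (s * x)) = complex_of_real (exp (- (s\<^sup>2) / 2))"
proof -
  have "(CLINT x|lborel. std_normal_density x *\<^sub>R iexp (s * x)) = char std_normal_distribution s"
    unfolding char_def by (subst integral_density) auto
  then show ?thesis by (simp add: char_std_normal_distribution)
qed

lemma integrable_N_iexp: "complex_integrable lborel (\<lambda>x. std_normal_density x *\<^sub>R iexp (s * x))"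
proof -
  interpret prob_space std_normal_distribution by (rule prob_space_normal_density; simp)
  have "complex_integrable std_normal_distribution (\<lambda>x. iexp (s * x))"
    by (rule integrable_iexp) auto
  then show ?thesis by (subst (asm) integrable_density) auto
qed

lemma char_inner:
  "char (distr (std_gauss::'a::euclidean_space measure) borel (\<lambda>\<xi>. u \<bullet> \<xi>)) t
     = complex_of_real (exp (- (norm u * t)\<^sup>2 / 2))"
proof -
  have "char (distr (std_gauss::'a measure) borel (\<lambda>\<xi>. u \<bullet> \<xi>)) t
      = (CLINT \<xi>|(std_gauss::'a measure). iexp (t * (u \<bullet> \<xi>)))"
    unfolding char_def by (subst integral_distr) (auto simp: std_gauss_def)
  also have "\<dots> = (CLINT \<xi>|(lborel::'a measure). gd \<xi> *\<^sub>R iexp (t * (u \<bullet> \<xi>)))"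
    unfolding std_gauss_gd by (subst integral_density) (auto simp: gd_def[abs_def])
  also have "\<dots> = (CLINT \<xi>|(lborel::'a measure). (\<Prod>b\<in>Basis. std_normal_density (\<xi> \<bullet> b) *\<^sub>R iexp ((t * (u \<bullet> b)) * (\<xi> \<bullet> b))))"
  proof (intro Bochner_Integration.integral_cong refl)
    fix \<xi> :: 'a
    have e: "iexp (t * (u \<bullet> \<xi>)) = (\<Prod>b\<in>Basis. iexp ((t * (u \<bullet> b)) * (\<xi> \<bullet> b)))"
      by (simp add: euclidean_inner[of u \<xi>] sum_distrib_left exp_sum[symmetric] mult_ac)
    show "gd \<xi> *\<^sub>R iexp (t * (u \<bullet> \<xi>)) = (\<Prod>b\<in>Basis. std_normal_density (\<xi> \<bullet> b) *\<^sub>R iexp ((t * (u \<bullet> b)) * (\<xi> \<bullet> b)))"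
      unfolding e gd_prod by (simp add: scaleR_conv_of_real prod.distrib)
  qed
  also have "\<dots> = (\<Prod>b\<in>(Basis::'a set). CLINT x|lborel. std_normal_density x *\<^sub>R iexp ((t * (u \<bullet> b)) * x))"
    by (rule integral_lborel_prod[where f="\<lambda>b x. std_normal_density x *\<^sub>R iexp ((t * (u \<bullet> b)) * x)"])
       (rule integrable_N_iexp)
  also have "\<dots> = (\<Prod>b\<in>(Basis::'a set). complex_of_real (exp (- ((t * (u \<bullet> b))\<^sup>2) / 2)))"
    by (intro prod.cong refl char_N_integral)
  also have "\<dots> = complex_of_real (exp (\<Sum>b\<in>(Basis::'a set). - ((t * (u \<bullet> b))\<^sup>2) / 2))"
    by (simp add: exp_sum)
  also have "(\<Sum>b\<in>(Basis::'a set). - ((t * (u \<bullet> b))\<^sup>2) / 2) = - (norm u * t)\<^sup>2 / 2"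
  proof -
    have "(norm u)\<^sup>2 = (\<Sum>b\<in>(Basis::'a set). (u \<bullet> b)\<^sup>2)"
      by (rule norm_sq_sum)
    then show ?thesis
      by (simp add: power_mult_distrib sum_divide_distrib[symmetric] sum_negf sum_distrib_left[symmetric])
  qed
  finally show ?thesis .
qed

lemma distr_inner:
  "distr (std_gauss::'a::euclidean_space measure) borel (\<lambda>\<xi>. u \<bullet> \<xi>)
     = distr std_normal_distribution borel (\<lambda>y. norm u * y)"
proof (rule Levy_uniqueness)
  interpret G: prob_space "std_gauss::'a measure" by (rule prob_space_std_gauss)
  interpret N: prob_space std_normal_distribution by (rule prob_space_normal_density; simp)
  show "real_distribution (distr (std_gauss::'a measure) borel (\<lambda>\<xi>. u \<bullet> \<xi>))"
    by (rule G.real_distribution_distr) (simp add: std_gauss_def)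
  show "real_distribution (distr std_normal_distribution borel (\<lambda>y. norm u * y))"
    by (rule N.real_distribution_distr) simp
  show "char (distr (std_gauss::'a measure) borel (\<lambda>\<xi>. u \<bullet> \<xi>)) = char (distr std_normal_distribution borel (\<lambda>y. norm u * y))"
  proof
    fix t
    have "char (distr std_normal_distribution borel (\<lambda>y. norm u * y)) t = char std_normal_distribution (t * norm u)"
      unfolding char_def by (subst integral_distr) (auto simp: mult_ac)
    then show "char (distr (std_gauss::'a measure) borel (\<lambda>\<xi>. u \<bullet> \<xi>)) t = char (distr std_normal_distribution borel (\<lambda>y. norm u * y)) t"
      by (simp add: char_inner char_std_normal_distribution mult_ac)
  qed
qed

definition Fa :: "real \<Rightarrow> real \<Rightarrow> real" where
  "Fa p q = (\<integral>y. std_normal_density y * \<bar>p + q * y\<bar> \<partial>lborel)"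

lemma Fa_integrable: "integrable lborel (\<lambda>y. std_normal_density y * \<bar>p + q * y\<bar>)"
proof (rule Bochner_Integration.integrable_bound)
  show "integrable lborel (\<lambda>y. \<bar>p\<bar> * std_normal_density y + \<bar>q\<bar> * (std_normal_density y * \<bar>y - 0\<bar> ^ 1))"
    using integrable_normal_moment_abs[of 1 0 1] by (intro Bochner_Integration.integrable_add integrable_mult_right) auto
  show "AE y in lborel. norm (std_normal_density y * \<bar>p + q * y\<bar>) \<le> norm (\<bar>p\<bar> * std_normal_density y + \<bar>q\<bar> * (std_normal_density y * \<bar>y - 0\<bar> ^ 1))"
  proof (intro AE_I2)
    fix y
    have "\<bar>p + q * y\<bar> \<le> \<bar>p\<bar> + \<bar>q\<bar> * \<bar>y\<bar>" by (simp add: abs_mult[symmetric] abs_triangle_ineq)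
    then have "std_normal_density y * \<bar>p + q * y\<bar> \<le> std_normal_density y * (\<bar>p\<bar> + \<bar>q\<bar> * \<bar>y\<bar>)"
      by (intro mult_left_mono) auto
    then show "norm (std_normal_density y * \<bar>p + q * y\<bar>) \<le> norm (\<bar>p\<bar> * std_normal_density y + \<bar>q\<bar> * (std_normal_density y * \<bar>y - 0\<bar> ^ 1))"
      by (simp add: algebra_simps)
  qed
qed simp

lemma Fa_N: "Fa p q = (\<integral>y. \<bar>p + q * y\<bar> \<partial>std_normal_distribution)"
  unfolding Fa_def by (subst integral_density) auto

lemma Fa_N_integrable: "integrable std_normal_distribution (\<lambda>y. \<bar>p + q * y\<bar>)"
  using Fa_integrable by (subst integrable_density) auto

lemma Fa_scale: assumes "0 \<le> \<rho>" shows "Fa (\<rho> * p) (\<rho> * q) = \<rho> * Fa p q"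
proof -
  have pw: "\<bar>\<rho> * p + \<rho> * q * y\<bar> = \<rho> * \<bar>p + q * y\<bar>" for y
  proof -
    have "\<rho> * p + \<rho> * q * y = \<rho> * (p + q * y)" by (simp add: algebra_simps)
    then show ?thesis using assms by (simp add: abs_mult)
  qed
  have "Fa (\<rho> * p) (\<rho> * q) = (\<integral>y. \<rho> * (std_normal_density y * \<bar>p + q * y\<bar>) \<partial>lborel)"
    unfolding Fa_def
    by (intro Bochner_Integration.integral_cong refl) (subst pw, simp only: mult_ac)
  then show ?thesis by (simp add: Fa_def)
qed

lemma Fa_q0[simp]: "Fa p 0 = \<bar>p\<bar>"
  unfolding Fa_def by simp

lemma Fa_1: "Fa a 1 = sqrt (2 / pi) * lambda_fun a"
  unfolding Fa_def using abs_normal_integral_lborel[of a] by simp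

lemma Fa_pos: assumes "0 < q" shows "Fa p q = q * (sqrt (2 / pi) * lambda_fun (p / q))"
proof -
  have "Fa p q = Fa (q * (p / q)) (q * 1)" using assms by simp
  also have "\<dots> = q * Fa (p / q) 1" using assms by (intro Fa_scale) simp
  finally show ?thesis by (simp add: Fa_1)
qed

lemma Fa_nonneg: "0 \<le> Fa p q"
  unfolding Fa_def by (intro integral_nonneg_AE) auto

lemma Fa_even: assumes "0 \<le> q" shows "Fa (- p) q = Fa p q"
proof (cases "q = 0")
  case False
  then have "0 < q" using assms by simp
  then show ?thesis using lambda_even[of "p / q"] by (simp add: Fa_pos)
qed simp

lemma Fa_abs: assumes "0 \<le> q" shows "Fa \<bar>p\<bar> q = Fa p q"
  using Fa_even[OF assms, of p] by (cases "0 \<le> p") auto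

lemma Fa_convex: "convex_on UNIV (\<lambda>p. Fa p q)"
proof (rule convex_onI)
  fix t x y :: real assume t: "0 < t" "t < 1"
  have "Fa ((1 - t) *\<^sub>R x + t *\<^sub>R y) q \<le> (\<integral>z. (1 - t) * (std_normal_density z * \<bar>x + q * z\<bar>) + t * (std_normal_density z * \<bar>y + q * z\<bar>) \<partial>lborel)"
    unfolding Fa_def
  proof (intro integral_mono Fa_integrable Bochner_Integration.integrable_add integrable_mult_right)
    fix z
    have "\<bar>(1 - t) * x + t * y + q * z\<bar> = \<bar>(1 - t) * (x + q * z) + t * (y + q * z)\<bar>"
      by (simp add: algebra_simps)
    also have "\<dots> \<le> \<bar>(1 - t) * (x + q * z)\<bar> + \<bar>t * (y + q * z)\<bar>" by (rule abs_triangle_ineq)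
    also have "\<dots> = (1 - t) * \<bar>x + q * z\<bar> + t * \<bar>y + q * z\<bar>" using t by (simp add: abs_mult)
    finally have "std_normal_density z * \<bar>(1 - t) * x + t * y + q * z\<bar> \<le> std_normal_density z * ((1 - t) * \<bar>x + q * z\<bar> + t * \<bar>y + q * z\<bar>)"
      by (intro mult_left_mono) auto
    then show "std_normal_density z * \<bar>(1 - t) *\<^sub>R x + t *\<^sub>R y + q * z\<bar> \<le> (1 - t) * (std_normal_density z * \<bar>x + q * z\<bar>) + t * (std_normal_density z * \<bar>y + q * z\<bar>)"
      by (simp add: algebra_simps)
  qed
  also have "\<dots> = (1 - t) * Fa x q + t * Fa y q"
    unfolding Fa_def using Fa_integrable by simp
  finally show "Fa ((1 - t) *\<^sub>R x + t *\<^sub>R y) q \<le> (1 - t) * Fa x q + t * Fa y q" .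
qed simp

lemma Fa_phi: assumes "0 \<le> q" shows "Fa p q = sqrt (2 / pi) * phi_inf (sqrt (pi / 2) * p) q"
proof (cases "q = 0")
  case True
  then show ?thesis
    by (simp add: phi_inf_def abs_mult mult.assoc[symmetric] sqrt_recip_aux)
next
  case False
  then have q: "0 < q" using assms by simp
  have e: "exp (- ((sqrt (pi / 2) * p)\<^sup>2) / (pi * q\<^sup>2)) = exp (- ((p / q)\<^sup>2) / 2)"
  proof -
    have h: "(sqrt (pi / 2) * p)\<^sup>2 = pi / 2 * p\<^sup>2" by (simp add: power_mult_distrib)
    have "- ((sqrt (pi / 2) * p)\<^sup>2) / (pi * q\<^sup>2) = - (pi / 2 * p\<^sup>2) / (pi * q\<^sup>2)" by (simp only: h)
    also have "\<dots> = - ((p / q)\<^sup>2) / 2" using q by (simp add: power_divide field_simps)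
    finally show ?thesis by simp
  qed
  have r: "sqrt (pi / 2) * p / (sqrt pi * q) = p / q / sqrt 2"
    using q by (simp add: real_sqrt_divide field_simps)
  have "phi_inf (sqrt (pi / 2) * p) q = q * exp (- ((sqrt (pi / 2) * p)\<^sup>2) / (pi * q\<^sup>2)) + sqrt (pi / 2) * p * erf (sqrt (pi / 2) * p / (sqrt pi * q))"
    using q by (simp add: phi_inf_def)
  also have "\<dots> = q * exp (- ((p / q)\<^sup>2) / 2) + sqrt (pi / 2) * p * erf (p / q / sqrt 2)"
    by (simp only: e r)
  also have "\<dots> = q * lambda_fun (p / q)"
    using q by (simp add: lambda_fun_def algebra_simps)
  finally show ?thesis using q by (simp add: Fa_pos)
qed

lemma phi_inf_abs: "phi_inf x \<bar>z\<bar> = phi_inf x z"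
  by (simp add: phi_inf_def)

lemma phi_inf_Fa: "phi_inf x z = sqrt (pi / 2) * Fa (sqrt (2 / pi) * x) \<bar>z\<bar>"
proof -
  have "Fa (sqrt (2 / pi) * x) \<bar>z\<bar> = sqrt (2 / pi) * phi_inf (sqrt (pi / 2) * (sqrt (2 / pi) * x)) \<bar>z\<bar>"
    by (rule Fa_phi) simp
  also have "sqrt (pi / 2) * (sqrt (2 / pi) * x) = x"
  proof -
    have "sqrt (pi / 2) * (sqrt (2 / pi) * x) = (sqrt (2 / pi) * sqrt (pi / 2)) * x" by (simp only: mult_ac)
    then show ?thesis using sqrt_recip_aux by simp
  qed
  finally have "Fa (sqrt (2 / pi) * x) \<bar>z\<bar> = sqrt (2 / pi) * phi_inf x z" by (simp add: phi_inf_abs)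
  then have "sqrt (pi / 2) * Fa (sqrt (2 / pi) * x) \<bar>z\<bar> = (sqrt (2 / pi) * sqrt (pi / 2)) * phi_inf x z" by (simp only: mult_ac)
  then show ?thesis using sqrt_recip_aux by simp
qed

lemma phi_inf_nonneg: "0 \<le> phi_inf x z"
  by (simp add: phi_inf_Fa Fa_nonneg)

lemma phi_inf_hom: assumes "0 < \<rho>" shows "phi_inf (\<rho> * x) (\<rho> * z) = \<rho> * phi_inf x z"
proof -
  have "phi_inf (\<rho> * x) (\<rho> * z) = sqrt (pi / 2) * Fa (\<rho> * (sqrt (2 / pi) * x)) (\<rho> * \<bar>z\<bar>)"
    using assms by (simp add: phi_inf_Fa abs_mult mult_ac)
  also have "\<dots> = \<rho> * phi_inf x z"
    using assms by (simp add: Fa_scale phi_inf_Fa)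
  finally show ?thesis .
qed

lemma bdd_phi: "bdd_below ((\<lambda>t. phi_inf (cos t) (sin t)) ` {0..2*pi})"
  by (rule bdd_belowI[of _ 0]) (auto simp: phi_inf_nonneg)

lemma b_inf_nonneg: "0 \<le> b_inf"
  unfolding b_inf_def by (rule cInf_greatest) (auto simp: phi_inf_nonneg)

lemma b_inf_le: "t \<in> {0..2*pi} \<Longrightarrow> b_inf \<le> phi_inf (cos t) (sin t)"
  unfolding b_inf_def by (rule cInf_lower[OF _ bdd_phi]) auto

lemma b_inf_le1: "b_inf \<le> 1"
  using b_inf_le[of 0] by (simp add: phi_inf_def)

lemma phi_inf_ge: "b_inf * sqrt (x\<^sup>2 + z\<^sup>2) \<le> phi_inf x z"
proof (cases "x = 0 \<and> z = 0")
  case True then show ?thesis by (simp add: phi_inf_nonneg)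
next
  case False
  define \<rho> where "\<rho> = sqrt (x\<^sup>2 + z\<^sup>2)"
  have s: "0 < x\<^sup>2 + z\<^sup>2" using False by (simp add: sum_power2_gt_zero_iff)
  then have \<rho>: "0 < \<rho>" by (simp add: \<rho>_def)
  have r2: "\<rho>\<^sup>2 = x\<^sup>2 + z\<^sup>2" unfolding \<rho>_def by simp
  have "(x / \<rho>)\<^sup>2 + (z / \<rho>)\<^sup>2 = (x\<^sup>2 + z\<^sup>2) / \<rho>\<^sup>2" by (simp add: power_divide add_divide_distrib)
  also have "\<dots> = 1" unfolding r2 by (rule divide_self) (use s in linarith)
  finally have "(x / \<rho>)\<^sup>2 + (z / \<rho>)\<^sup>2 = 1" .
  then obtain t where t: "0 \<le> t" "t < 2*pi" "x / \<rho> = cos t" "z / \<rho> = sin t"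
    by (rule sincos_total_2pi)
  have "phi_inf x z = phi_inf (\<rho> * (x / \<rho>)) (\<rho> * (z / \<rho>))" using \<rho> by simp
  also have "\<dots> = \<rho> * phi_inf (cos t) (sin t)" using \<rho> t by (simp add: phi_inf_hom)
  finally have "phi_inf x z = \<rho> * phi_inf (cos t) (sin t)" .
  moreover have "b_inf \<le> phi_inf (cos t) (sin t)" using t by (intro b_inf_le) auto
  ultimately show ?thesis using \<rho> by (simp add: \<rho>_def[symmetric] mult.commute)
qed

lemma std_gauss_meas[measurable]: "(\<lambda>\<xi>. u \<bullet> \<xi>) \<in> measurable (std_gauss :: 'a::euclidean_space measure) borel"
  by (simp add: std_gauss_def)

lemma integral_inner_gauss:
  fixes f :: "real \<Rightarrow> real" and u :: "'a::euclidean_space"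
  assumes [measurable]: "f \<in> borel_measurable borel"
  shows "(\<integral>\<xi>. f (u \<bullet> \<xi>) \<partial>(std_gauss::'a measure)) = (\<integral>y. f (norm u * y) \<partial>std_normal_distribution)"
    and "integrable (std_gauss::'a measure) (\<lambda>\<xi>. f (u \<bullet> \<xi>)) \<longleftrightarrow> integrable std_normal_distribution (\<lambda>y. f (norm u * y))"
proof -
  have "(\<integral>\<xi>. f (u \<bullet> \<xi>) \<partial>(std_gauss::'a measure)) = (\<integral>s. f s \<partial>distr (std_gauss::'a measure) borel (\<lambda>\<xi>. u \<bullet> \<xi>))"
    by (rule integral_distr[symmetric]) auto
  also have "\<dots> = (\<integral>s. f s \<partial>distr std_normal_distribution borel (\<lambda>y. norm u * y))"
    by (simp only: distr_inner)
  also have "\<dots> = (\<integral>y. f (norm u * y) \<partial>std_normal_distribution)"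
    by (rule integral_distr) auto
  finally show "(\<integral>\<xi>. f (u \<bullet> \<xi>) \<partial>(std_gauss::'a measure)) = (\<integral>y. f (norm u * y) \<partial>std_normal_distribution)" .
  have "integrable (std_gauss::'a measure) (\<lambda>\<xi>. f (u \<bullet> \<xi>)) \<longleftrightarrow> integrable (distr (std_gauss::'a measure) borel (\<lambda>\<xi>. u \<bullet> \<xi>)) f"
    by (rule integrable_distr_eq[symmetric]) auto
  also have "\<dots> \<longleftrightarrow> integrable (distr std_normal_distribution borel (\<lambda>y. norm u * y)) f"
    by (simp only: distr_inner)
  also have "\<dots> \<longleftrightarrow> integrable std_normal_distribution (\<lambda>y. f (norm u * y))"
    by (rule integrable_distr_eq) auto
  finally show "integrable (std_gauss::'a measure) (\<lambda>\<xi>. f (u \<bullet> \<xi>)) \<longleftrightarrow> integrable std_normal_distribution (\<lambda>y. f (norm u * y))" .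
qed

lemma zs_formula: "zonoid_support c u = Fa (u \<bullet> c) (norm u) / 2"
proof -
  have "(\<integral>\<xi>. \<bar>u \<bullet> (c + \<xi>)\<bar> \<partial>std_gauss) = (\<integral>\<xi>. \<bar>u \<bullet> c + u \<bullet> \<xi>\<bar> \<partial>(std_gauss::'a measure))"
    by (simp add: inner_add_right)
  also have "\<dots> = (\<integral>y. \<bar>u \<bullet> c + norm u * y\<bar> \<partial>std_normal_distribution)"
    by (rule integral_inner_gauss(1)[where f="\<lambda>s. \<bar>u \<bullet> c + s\<bar>"]) simp
  also have "\<dots> = Fa (u \<bullet> c) (norm u)" by (simp add: Fa_N)
  finally show ?thesis by (simp add: zonoid_support_def)
qed

lemma gd_pair: "gd (x::real, y::real) = std_normal_density x * std_normal_density y"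
  by (simp add: gd_prod Basis_prod_def)

lemma fubini2:
  fixes \<alpha> \<beta> r :: real
  assumes \<beta>: "0 \<le> \<beta>"
  shows "integrable std_normal_distribution (\<lambda>x. Fa (\<alpha> * (r + x)) \<beta>)"
    and "(\<integral>x. Fa (\<alpha> * (r + x)) \<beta> \<partial>std_normal_distribution) = Fa (\<alpha> * r) (sqrt (\<alpha>\<^sup>2 + \<beta>\<^sup>2))"
proof -
  let ?v = "(\<alpha>, \<beta>) :: real \<times> real"
  let ?g = "\<lambda>\<xi>::real\<times>real. \<bar>\<alpha> * r + ?v \<bullet> \<xi>\<bar>"
  have nv: "norm ?v = sqrt (\<alpha>\<^sup>2 + \<beta>\<^sup>2)" by (simp add: norm_Pair)
  have gi: "integrable (std_gauss :: (real \<times> real) measure) ?g"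
    using integral_inner_gauss(2)[where f="\<lambda>s. \<bar>\<alpha> * r + s\<bar>" and u="?v"] Fa_N_integrable by simp
  have gv: "(\<integral>\<xi>. ?g \<xi> \<partial>(std_gauss :: (real \<times> real) measure)) = Fa (\<alpha> * r) (sqrt (\<alpha>\<^sup>2 + \<beta>\<^sup>2))"
    using integral_inner_gauss(1)[where f="\<lambda>s. \<bar>\<alpha> * r + s\<bar>" and u="?v"] by (simp add: Fa_N nv)
  define h where "h z = std_normal_density (fst z) * (std_normal_density (snd z) * \<bar>\<alpha> * (r + fst z) + \<beta> * snd z\<bar>)" for z :: "real \<times> real"
  have hg: "gd z * ?g z = h z" for z
    by (cases z) (simp add: gd_pair h_def algebra_simps)
  have hm[measurable]: "h \<in> borel_measurable (lborel \<Otimes>\<^sub>M lborel)" unfolding h_def by measurable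
  have "integrable (lborel :: (real \<times> real) measure) (\<lambda>z. gd z *\<^sub>R ?g z)"
    using gi unfolding std_gauss_gd by (subst (asm) integrable_density) (auto simp: gd_def[abs_def])
  then have hi: "integrable (lborel \<Otimes>\<^sub>M lborel) h"
    by (simp add: hg lborel_prod)
  have hv: "(\<integral>z. h z \<partial>(lborel \<Otimes>\<^sub>M lborel)) = Fa (\<alpha> * r) (sqrt (\<alpha>\<^sup>2 + \<beta>\<^sup>2))"
  proof -
    have "(\<integral>\<xi>. ?g \<xi> \<partial>(std_gauss :: (real \<times> real) measure)) = (\<integral>z. gd z *\<^sub>R ?g z \<partial>(lborel :: (real \<times> real) measure))"
      unfolding std_gauss_gd by (subst integral_density) (auto simp: gd_def[abs_def])
    then show ?thesis using gv by (simp add: hg lborel_prod)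
  qed
  have inner: "(\<integral>y. h (x, y) \<partial>lborel) = std_normal_density x * Fa (\<alpha> * (r + x)) \<beta>" for x
    unfolding h_def Fa_def by simp
  have "integrable lborel (\<lambda>x. \<integral>y. h (x, y) \<partial>lborel)"
    by (rule lborel_pair.integrable_fst'[OF hi])
  then have i2: "integrable lborel (\<lambda>x. std_normal_density x * Fa (\<alpha> * (r + x)) \<beta>)"
    by (simp only: inner)
  show "integrable std_normal_distribution (\<lambda>x. Fa (\<alpha> * (r + x)) \<beta>)"
    using i2 by (subst integrable_density) (auto simp: Fa_def)
  have "(\<integral>x. (\<integral>y. h (x, y) \<partial>lborel) \<partial>lborel) = (\<integral>z. h z \<partial>(lborel \<Otimes>\<^sub>M lborel))"
    by (rule lborel_pair.integral_fst'[OF hi])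
  then have "(\<integral>x. std_normal_density x * Fa (\<alpha> * (r + x)) \<beta> \<partial>lborel) = Fa (\<alpha> * r) (sqrt (\<alpha>\<^sup>2 + \<beta>\<^sup>2))"
    by (simp only: inner hv)
  then show "(\<integral>x. Fa (\<alpha> * (r + x)) \<beta> \<partial>std_normal_distribution) = Fa (\<alpha> * r) (sqrt (\<alpha>\<^sup>2 + \<beta>\<^sup>2))"
    by (subst integral_density) (auto simp: Fa_def)
qed

lemma T_sym: "u \<bullet> T c v = T c u \<bullet> v"
  by (simp add: T_def inner_add_left inner_add_right inner_commute)

lemma T_scale: "T c (s *\<^sub>R v) = s *\<^sub>R T c v"
  by (simp add: T_def scaleR_add_right algebra_simps)

lemma T_zero[simp]: "T 0 v = v" by (simp add: T_def)

lemma lambda_pos: "0 < lambda_fun s"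
proof -
  have "1 \<le> lambda_fun \<bar>s\<bar>" by (rule lambda_ge1) simp
  moreover have "lambda_fun \<bar>s\<bar> = lambda_fun s" by (cases "0 \<le> s") (auto simp: lambda_even)
  ultimately show ?thesis by simp
qed

lemma aux_k: "(l::real) \<noteq> 0 \<Longrightarrow> (1 / l - 1) * k + (l - 1) * (k / l) = 0"
  by (simp add: field_simps)

definition Ti :: "'a::euclidean_space \<Rightarrow> 'a \<Rightarrow> 'a" where
  "Ti c x = (if c = 0 then x
     else x + ((1 / lambda_fun (norm c) - 1) * (inner c x / (norm c)\<^sup>2)) *\<^sub>R c)"

lemma T_Ti: "T c (Ti c z) = z"
proof (cases "c = 0")
  case False
  let ?l = "lambda_fun (norm c)" and ?k = "inner c z / (norm c)\<^sup>2"
  have l: "?l \<noteq> 0" using lambda_pos[of "norm c"] by simp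
  have cc: "c \<bullet> c = (norm c)\<^sup>2" by (simp add: power2_norm_eq_inner)
  have nc: "(norm c)\<^sup>2 \<noteq> 0" using False by simp
  have ci: "c \<bullet> Ti c z / (norm c)\<^sup>2 = ?k / ?l"
    using False l nc by (simp add: Ti_def inner_add_right cc field_simps)
  have "T c (Ti c z) = Ti c z + ((?l - 1) * (?k / ?l)) *\<^sub>R c"
    using False by (simp add: T_def ci)
  also have "\<dots> = z + ((1 / ?l - 1) * ?k + (?l - 1) * (?k / ?l)) *\<^sub>R c"
    using False by (simp add: Ti_def scaleR_add_left)
  also have "(1 / ?l - 1) * ?k + (?l - 1) * (?k / ?l) = 0"
    by (rule aux_k[OF l])
  finally show ?thesis by simp
qed (simp add: Ti_def)

lemma pyth_c:
  assumes "w \<bullet> c = 0"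
  shows "(norm (w + k *\<^sub>R c))\<^sup>2 = (norm w)\<^sup>2 + k\<^sup>2 * (norm c)\<^sup>2"
proof -
  have "(norm (w + k *\<^sub>R c))\<^sup>2 = (w + k *\<^sub>R c) \<bullet> (w + k *\<^sub>R c)" by (rule power2_norm_eq_inner)
  also have "\<dots> = w \<bullet> w + 2 * k * (w \<bullet> c) + k\<^sup>2 * (c \<bullet> c)"
    by (simp add: inner_add_left inner_add_right inner_commute[of c w] power2_eq_square algebra_simps)
  finally show ?thesis using assms by (simp add: power2_norm_eq_inner)
qed

lemma decomp:
  fixes c u :: "'a::euclidean_space"
  assumes c: "c \<noteq> 0"
  assumes r_def: "r = norm c"
  assumes \<alpha>_def: "\<alpha> = (u \<bullet> c) / r"
  assumes w_def: "w = u - (\<alpha> / r) *\<^sub>R c"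
  shows "u \<bullet> c = \<alpha> * r" "(norm u)\<^sup>2 = \<alpha>\<^sup>2 + (norm w)\<^sup>2"
    "(norm (T c u))\<^sup>2 = (lambda_fun r * \<alpha>)\<^sup>2 + (norm w)\<^sup>2" "0 < r"
proof -
  show r: "0 < r" using c by (simp add: r_def)
  show uc: "u \<bullet> c = \<alpha> * r" using r by (simp add: \<alpha>_def)
  have cc: "c \<bullet> c = r\<^sup>2" by (simp add: r_def power2_norm_eq_inner)
  have wc: "w \<bullet> c = 0"
    using r by (simp add: w_def inner_diff_left cc uc power2_eq_square)
  have u: "u = w + (\<alpha> / r) *\<^sub>R c" by (simp add: w_def)
  have "(norm u)\<^sup>2 = (norm w)\<^sup>2 + (\<alpha> / r)\<^sup>2 * r\<^sup>2"
    by (subst u, subst pyth_c[OF wc]) (simp add: r_def)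
  then show "(norm u)\<^sup>2 = \<alpha>\<^sup>2 + (norm w)\<^sup>2" using r by (simp add: power_divide)
  have "T c u = w + (lambda_fun r * \<alpha> / r) *\<^sub>R c"
  proof -
    have "c \<bullet> u / (norm c)\<^sup>2 = \<alpha> / r"
      using r by (simp add: inner_commute[of c u] uc r_def[symmetric] power2_eq_square)
    then have "T c u = u + ((lambda_fun r - 1) * (\<alpha> / r)) *\<^sub>R c"
      using c by (simp add: T_def r_def)
    also have "\<dots> = w + (\<alpha> / r + (lambda_fun r - 1) * (\<alpha> / r)) *\<^sub>R c"
      by (simp add: w_def scaleR_add_left)
    also have "\<alpha> / r + (lambda_fun r - 1) * (\<alpha> / r) = lambda_fun r * \<alpha> / r"
      by (simp add: algebra_simps)
    finally show ?thesis .
  qed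
  then have "(norm (T c u))\<^sup>2 = (norm w)\<^sup>2 + (lambda_fun r * \<alpha> / r)\<^sup>2 * r\<^sup>2"
    by (simp add: pyth_c[OF wc] r_def)
  then show "(norm (T c u))\<^sup>2 = (lambda_fun r * \<alpha>)\<^sup>2 + (norm w)\<^sup>2" using r by (simp add: power_divide)
qed

lemma inv_sqrt_2pi: "1 / sqrt (2 * pi) = sqrt (2 / pi) / 2"
  using sqrt_2pi_aux by (simp add: field_simps)

lemma zs_c0: "zonoid_support 0 u = norm u / sqrt (2 * pi)"
proof (cases "u = 0")
  case False
  then have "0 < norm u" by simp
  then have "Fa (u \<bullet> 0) (norm u) = norm u * sqrt (2 / pi)" by (simp add: Fa_pos)
  then have "zonoid_support 0 u = norm u * (sqrt (2 / pi) / 2)" by (simp add: zs_formula)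
  then show ?thesis by (simp add: inv_sqrt_2pi[symmetric])
qed (simp add: zs_formula)

lemma zs_upper: "zonoid_support c u \<le> norm (T c u) / sqrt (2 * pi)"
proof (cases "c = 0")
  case True then show ?thesis by (simp add: zs_c0)
next
  case c: False
  define r where "r = norm c"
  define \<alpha> where "\<alpha> = (u \<bullet> c) / r"
  define w where "w = u - (\<alpha> / r) *\<^sub>R c"
  note d = decomp[OF c r_def \<alpha>_def w_def]
  show ?thesis
  proof (cases "u = 0")
    case True then show ?thesis by (simp add: zs_formula)
  next
    case False
    define \<rho> where "\<rho> = norm u"
    have \<rho>: "0 < \<rho>" using False by (simp add: \<rho>_def)
    define a where "a = \<alpha> / \<rho>"
    have \<alpha>a: "\<alpha> = \<rho> * a" using \<rho> by (simp add: a_def)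
    have \<rho>2: "\<rho>\<^sup>2 = \<alpha>\<^sup>2 + (norm w)\<^sup>2" using d(2) by (simp add: \<rho>_def)
    have "\<alpha>\<^sup>2 \<le> \<rho>\<^sup>2" using \<rho>2 by simp
    then have "\<bar>\<alpha>\<bar> \<le> \<rho>" using power2_le_imp_le[of "\<bar>\<alpha>\<bar>" \<rho>] \<rho> by simp
    then have a1: "\<bar>a\<bar> \<le> 1" using \<rho> by (simp add: a_def abs_divide divide_le_eq_1)
    have key: "(lambda_fun (r * a))\<^sup>2 \<le> (lambda_fun r)\<^sup>2 * a\<^sup>2 + 1 - a\<^sup>2"
      by (rule key_ineq) (use a1 in \<open>simp_all add: r_def\<close>)
    have "(\<rho> * lambda_fun (r * a))\<^sup>2 = \<rho>\<^sup>2 * (lambda_fun (r * a))\<^sup>2" by (simp add: power_mult_distrib)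
    also have "\<dots> \<le> \<rho>\<^sup>2 * ((lambda_fun r)\<^sup>2 * a\<^sup>2 + 1 - a\<^sup>2)"
      by (rule mult_left_mono[OF key]) simp
    also have "\<dots> = (lambda_fun r * \<alpha>)\<^sup>2 + (norm w)\<^sup>2"
      using \<rho>2 by (simp add: \<alpha>a power_mult_distrib algebra_simps)
    also have "\<dots> = (norm (T c u))\<^sup>2" using d(3) by simp
    finally have "\<rho> * lambda_fun (r * a) \<le> norm (T c u)"
      by (rule power2_le_imp_le) simp
    moreover have "Fa (u \<bullet> c) (norm u) = \<rho> * (sqrt (2 / pi) * lambda_fun (r * a))"
    proof -
      have "u \<bullet> c / \<rho> = r * a" using \<rho> d(1) by (simp add: a_def)
      then show ?thesis using \<rho> by (simp add: Fa_pos \<rho>_def[symmetric])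
    qed
    ultimately have "zonoid_support c u \<le> norm (T c u) * (sqrt (2 / pi) / 2)"
      by (simp add: zs_formula mult_right_mono)
    then show ?thesis by (simp add: inv_sqrt_2pi[symmetric])
  qed
qed

lemma zs_lower: "b_inf * norm (T c u) / sqrt (2 * pi) \<le> zonoid_support c u"
proof (cases "c = 0")
  case True
  have "b_inf * norm u \<le> 1 * norm u" by (rule mult_right_mono[OF b_inf_le1]) simp
  then show ?thesis using True by (simp add: zs_c0 divide_right_mono)
next
  case c: False
  define r where "r = norm c"
  define \<alpha> where "\<alpha> = (u \<bullet> c) / r"
  define w where "w = u - (\<alpha> / r) *\<^sub>R c"
  define \<beta> where "\<beta> = norm w"
  note d = decomp[OF c r_def \<alpha>_def w_def]
  have \<beta>0: "0 \<le> \<beta>" by (simp add: \<beta>_def)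
  have nu: "norm u = sqrt (\<alpha>\<^sup>2 + \<beta>\<^sup>2)"
    using d(2) by (metis \<beta>_def norm_ge_zero real_sqrt_unique)
  have nT: "norm (T c u) = sqrt ((\<bar>\<alpha>\<bar> * lambda_fun r)\<^sup>2 + \<beta>\<^sup>2)"
  proof -
    have "(\<bar>\<alpha>\<bar> * lambda_fun r)\<^sup>2 = (lambda_fun r * \<alpha>)\<^sup>2" by (simp add: power_mult_distrib)
    then show ?thesis using d(3) by (metis \<beta>_def norm_ge_zero real_sqrt_unique)
  qed
  interpret N: prob_space std_normal_distribution by (rule prob_space_normal_density; simp)
  define X where "X x = \<bar>\<alpha>\<bar> * \<bar>r + 1 * x\<bar>" for x
  have iX: "integrable std_normal_distribution X"
    unfolding X_def by (intro integrable_mult_right Fa_N_integrable)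
  have e1: "(\<integral>x. \<bar>r + x\<bar> \<partial>std_normal_distribution) = sqrt (2 / pi) * lambda_fun r"
    using Fa_N[of r 1] Fa_1[of r] by simp
  have eX: "N.expectation X = \<bar>\<alpha>\<bar> * (sqrt (2 / pi) * lambda_fun r)"
    unfolding X_def using e1 by simp
  have qX: "Fa (X x) \<beta> = Fa (\<alpha> * (r + x)) \<beta>" for x
  proof -
    have "X x = \<bar>\<alpha> * (r + x)\<bar>" by (simp add: X_def abs_mult)
    then show ?thesis using Fa_abs[OF \<beta>0] by simp
  qed
  have iq: "integrable std_normal_distribution (\<lambda>x. Fa (X x) \<beta>)"
    unfolding qX by (rule fubini2(1)[OF \<beta>0])
  have "Fa (N.expectation X) \<beta> \<le> N.expectation (\<lambda>x. Fa (X x) \<beta>)"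
    by (rule N.jensens_inequality[OF iX _ _ iq Fa_convex]) auto
  also have "\<dots> = Fa (\<alpha> * r) (sqrt (\<alpha>\<^sup>2 + \<beta>\<^sup>2))"
    unfolding qX by (rule fubini2(2)[OF \<beta>0])
  also have "\<dots> = Fa (u \<bullet> c) (norm u)" by (simp add: nu d(1))
  finally have j: "Fa (\<bar>\<alpha>\<bar> * (sqrt (2 / pi) * lambda_fun r)) \<beta> \<le> Fa (u \<bullet> c) (norm u)"
    by (simp only: eX)
  have s: "sqrt (pi / 2) * (\<bar>\<alpha>\<bar> * (sqrt (2 / pi) * lambda_fun r)) = \<bar>\<alpha>\<bar> * lambda_fun r"
  proof -
    have "sqrt (pi / 2) * (\<bar>\<alpha>\<bar> * (sqrt (2 / pi) * lambda_fun r)) = (sqrt (2 / pi) * sqrt (pi / 2)) * (\<bar>\<alpha>\<bar> * lambda_fun r)"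
      by (simp only: mult_ac)
    then show ?thesis using sqrt_recip_aux by simp
  qed
  have fe: "Fa (\<bar>\<alpha>\<bar> * (sqrt (2 / pi) * lambda_fun r)) \<beta> = sqrt (2 / pi) * phi_inf (\<bar>\<alpha>\<bar> * lambda_fun r) \<beta>"
    by (simp only: Fa_phi[OF \<beta>0] s)
  have "b_inf * norm (T c u) \<le> phi_inf (\<bar>\<alpha>\<bar> * lambda_fun r) \<beta>"
    unfolding nT by (rule phi_inf_ge)
  then have "sqrt (2 / pi) * (b_inf * norm (T c u)) \<le> sqrt (2 / pi) * phi_inf (\<bar>\<alpha>\<bar> * lambda_fun r) \<beta>"
    by (rule mult_left_mono) simp
  also have "\<dots> \<le> Fa (u \<bullet> c) (norm u)" using j by (simp only: fe)
  finally have "sqrt (2 / pi) * (b_inf * norm (T c u)) \<le> Fa (u \<bullet> c) (norm u)" .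
  then have "b_inf * norm (T c u) * (sqrt (2 / pi) / 2) \<le> zonoid_support c u"
    by (simp add: zs_formula mult_ac)
  then show ?thesis by (simp add: inv_sqrt_2pi[symmetric])
qed

theorem theorem2p10:
  fixes c :: "'a::euclidean_space"
  shows "(\<lambda>x. b_inf *\<^sub>R x) ` (T c ` ((\<lambda>x. (1 / sqrt (2*pi)) *\<^sub>R x) ` cball 0 1)) \<subseteq> G c
     \<and> G c \<subseteq> T c ` ((\<lambda>x. (1 / sqrt (2*pi)) *\<^sub>R x) ` cball 0 1)"
proof
  let ?s = "1 / sqrt (2 * pi)"
  have s0: "0 < ?s" by simp
  show "(\<lambda>x. b_inf *\<^sub>R x) ` (T c ` ((\<lambda>x. ?s *\<^sub>R x) ` cball 0 1)) \<subseteq> G c"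
  proof clarify
    fix y :: 'a assume y: "y \<in> cball 0 1"
    then have ny: "norm y \<le> 1" by simp
    show "b_inf *\<^sub>R T c (?s *\<^sub>R y) \<in> G c"
      unfolding G_def
    proof (clarify)
      fix u :: 'a
      have "u \<bullet> (b_inf *\<^sub>R T c (?s *\<^sub>R y)) = b_inf * ?s * (T c u \<bullet> y)"
        by (simp add: T_scale T_sym)
      also have "\<dots> \<le> b_inf * ?s * (norm (T c u) * norm y)"
        by (intro mult_left_mono norm_cauchy_schwarz) (simp add: b_inf_nonneg)
      also have "\<dots> \<le> b_inf * ?s * (norm (T c u) * 1)"
        by (intro mult_left_mono ny) (simp_all add: b_inf_nonneg)
      also have "\<dots> = b_inf * norm (T c u) / sqrt (2 * pi)" by simp
      also have "\<dots> \<le> zonoid_support c u" by (rule zs_lower)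
      finally show "u \<bullet> (b_inf *\<^sub>R T c (?s *\<^sub>R y)) \<le> zonoid_support c u" .
    qed
  qed
  show "G c \<subseteq> T c ` ((\<lambda>x. ?s *\<^sub>R x) ` cball 0 1)"
  proof
    fix x assume x: "x \<in> G c"
    define z where "z = Ti c x"
    define u where "u = Ti c z"
    have Tz: "T c z = x" by (simp add: z_def T_Ti)
    have Tu: "T c u = z" by (simp add: u_def T_Ti)
    have "(norm z)\<^sup>2 = u \<bullet> x"
      by (simp add: Tz[symmetric] T_sym Tu power2_norm_eq_inner)
    also have "\<dots> \<le> zonoid_support c u" using x by (simp add: G_def)
    also have "\<dots> \<le> norm z * ?s" using zs_upper[of c u] by (simp add: Tu)
    finally have zz: "norm z * norm z \<le> norm z * ?s" by (simp add: power2_eq_square)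
    have nz: "norm z \<le> ?s"
    proof (cases "norm z = 0")
      case True then show ?thesis using s0 by simp
    next
      case False then have "0 < norm z" by simp
      then show ?thesis by (rule mult_left_le_imp_le[OF zz])
    qed
    define y where "y = sqrt (2 * pi) *\<^sub>R z"
    have "norm y = sqrt (2 * pi) * norm z" by (simp add: y_def)
    also have "\<dots> \<le> sqrt (2 * pi) * ?s" by (rule mult_left_mono[OF nz]) simp
    also have "\<dots> = 1" by simp
    finally have yb: "y \<in> cball 0 1" by simp
    have "?s *\<^sub>R y = z" by (simp add: y_def)
    then have "x = T c (?s *\<^sub>R y)" by (simp add: Tz)
    then show "x \<in> T c ` ((\<lambda>x. ?s *\<^sub>R x) ` cball 0 1)" using yb by blast
  qed
qed

end
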